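(* Let $\mathcal{G}=(V,E)$ be an undirected graph on $V=\{v_1,\dots,v_k\}$, let $\mathcal{S}$ be the set of valid states, and let $\mathcal{C}$ be a collection of correlation sets, each of size at most $2$, with associated mean losses $\mu_i^s$ (all as defined in the context). Let $\mathcal{K}\subseteq\mathcal{S}$ be a cover of $\mathcal{C}$. For $i,j\in[k]$ and $b\in\{0,1\}$, define $X^{i,j}_b:=\mu_i^{s_2}-\mu_i^{s_1}$, where $(s_1,s_2)$ is an $(i,j,b)$-pair contained in $\mathcal{K}$ (so $s_1(j)=0$, $s_2(j)=1$), whenever $\{i,j\}\in\mathcal{C}$ and $(i,j,b)$ is a dichotomy; set $X^{i,j}_b:=0$ otherwise. Then for every state $s\in\mathcal{S}$ and every $i\in[k]$ with $s(i)=b$, and every state $s'\in\mathcal{K}$ with $s'(i)=b$, $$\mu_i^s=\mu_i^{s'}+\sum_{j=1}^k X^{i,j}_b\big[\mathbf{1}(s(j)=1)\mathbf{1}(s'(j)=0)-\mathbf{1}(s(j)=0)\mathbf{1}(s'(j)=1)\big].$$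
   Context: Write $[k]=\{1,\dots,k\}$. The valid states are $\mathcal{S}=\{s\in\{0,1\}^k : \{v_i: s(i)=1\}\text{ is an independent set of }\mathcal{G}\}$ ($s(i)=1$ means criterion $i$ is "fixed", $s(i)=0$ "unfixed"). A collection of correlation sets $\mathcal{C}=\{C_1,\dots,C_n\}$ consists of subsets of $[k]$ of size at most $m$ (here $m=2$). For each state $s$ and each $j\in[n]$ there is a parameter $\theta_j^s\ge 0$ which depends only on the restriction of $s$ to the coordinates in $C_j$ (i.e. $\theta_j^s=\theta_j^{s'}$ whenever $s$ and $s'$ agree on $C_j$). The mean loss of criterion $i$ at state $s$ is $\mu_i^s=\sum_{j=1}^n\theta_j^s\,\mathbf{1}(i\in C_j)$. For $i\neq j$ and $b\in\{0,1\}$, $(i,j,b)$ is a dichotomy if there exist $s,s'\in\mathcal{S}$ with $s(j)=0$, $s'(j)=1$ and $s(i)=s'(i)=b$. An $(i,j,b)$-pair is a pair $(s,s')$ of states that agree in every coordinate except $j$, with $s(i)=s'(i)=b$, $s(j)=0$, $s'(j)=1$. A subset $\mathcal{K}\subseteq\mathcal{S}$ is a cover of $\mathcal{C}$ if (1) for every $\{i,j\}\in\mathcal{C}$ and every dichotomy $(i,j,b)$ (in either order of $i,j$), $\mathcal{K}$ contains an $(i,j,b)$-pair, and (2) for every singleton $\{i\}\in\mathcal{C}$, $\mathcal{K}$ contains states $s,s'$ with $s(i)=0$, $s'(i)=1$ and $s(l)=s'(l)$ for all $l\neq i$. *)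

theory Defs
  imports Complex_Main
begin

text \<open>Conventions: criteria/vertices are 1..k. A state is a function nat => bool
  (True = fixed, i.e. s(i)=1), which is False outside 1..k. Correlation sets are C_1..C_n,
  given by Cs :: nat => nat set on indices 1..n; parameters theta l s.\<close>

definition valid_states :: "nat \<Rightarrow> (nat \<Rightarrow> nat \<Rightarrow> bool) \<Rightarrow> (nat \<Rightarrow> bool) set" where
  "valid_states k E = {s. (\<forall>i. s i \<longrightarrow> i \<in> {1..k}) \<and> (\<forall>u v. s u \<and> s v \<longrightarrow> \<not> E u v)}"

definition mean_loss :: "nat \<Rightarrow> (nat \<Rightarrow> nat set) \<Rightarrow> (nat \<Rightarrow> (nat \<Rightarrow> bool) \<Rightarrow> real)
    \<Rightarrow> nat \<Rightarrow> (nat \<Rightarrow> bool) \<Rightarrow> real" where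
  "mean_loss n Cs \<theta> i s = (\<Sum>l\<in>{1..n}. \<theta> l s * of_bool (i \<in> Cs l))"

definition in_corr :: "nat \<Rightarrow> (nat \<Rightarrow> nat set) \<Rightarrow> nat set \<Rightarrow> bool" where
  "in_corr n Cs A = (\<exists>l\<in>{1..n}. Cs l = A)"

definition dichotomy :: "(nat \<Rightarrow> bool) set \<Rightarrow> nat \<Rightarrow> nat \<Rightarrow> bool \<Rightarrow> bool" where
  "dichotomy S i j b = (i \<noteq> j \<and> (\<exists>s\<in>S. \<exists>s'\<in>S. \<not> s j \<and> s' j \<and> s i = b \<and> s' i = b))"

definition is_pair :: "nat \<Rightarrow> nat \<Rightarrow> bool \<Rightarrow> (nat \<Rightarrow> bool) \<Rightarrow> (nat \<Rightarrow> bool) \<Rightarrow> bool" where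
  "is_pair i j b s s' = ((\<forall>l. l \<noteq> j \<longrightarrow> s l = s' l) \<and> s i = b \<and> s' i = b \<and> \<not> s j \<and> s' j)"

definition is_cover :: "(nat \<Rightarrow> bool) set \<Rightarrow> nat \<Rightarrow> (nat \<Rightarrow> nat set) \<Rightarrow> (nat \<Rightarrow> bool) set \<Rightarrow> bool" where
  "is_cover S n Cs K =
     (K \<subseteq> S \<and>
      (\<forall>i j b. in_corr n Cs {i, j} \<and> i \<noteq> j \<and> dichotomy S i j b \<longrightarrow>
          (\<exists>s\<in>K. \<exists>s'\<in>K. is_pair i j b s s')) \<and>
      (\<forall>i. in_corr n Cs {i} \<longrightarrow>
          (\<exists>s\<in>K. \<exists>s'\<in>K. \<not> s i \<and> s' i \<and> (\<forall>l. l \<noteq> i \<longrightarrow> s l = s' l))))"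

end

theory Submission
  imports Defs
begin

lemma aux_cancel: "(x::real) = c * t \<Longrightarrow> c * c = 1 \<Longrightarrow> x * c = t"
  by algebra

lemma card2_cases:
  assumes "finite C" "card C \<le> 2" "i \<in> C"
  shows "C = {i} \<or> (\<exists>j. j \<noteq> i \<and> C = {i, j})"
proof -
  have "card (C - {i}) \<le> 1" using assms by (simp add: card_Diff_singleton)
  then have "C - {i} = {} \<or> (\<exists>j. C - {i} = {j})" using assms(1)
    by (metis card_0_eq card_1_singletonE finite_Diff le_eq_less_or_eq less_one)
  then show ?thesis using assms(3) by blast
qed

theorem theorem1:
  fixes k n :: nat
    and E :: "nat \<Rightarrow> nat \<Rightarrow> bool"
    and Cs :: "nat \<Rightarrow> nat set"
    and \<theta> :: "nat \<Rightarrow> (nat \<Rightarrow> bool) \<Rightarrow> real"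
    and K :: "(nat \<Rightarrow> bool) set"
    and X :: "nat \<Rightarrow> nat \<Rightarrow> bool \<Rightarrow> real"
  assumes E_sym: "\<And>u v. E u v \<Longrightarrow> E v u"
    and E_irrefl: "\<And>u. \<not> E u u"
    and E_verts: "\<And>u v. E u v \<Longrightarrow> u \<in> {1..k} \<and> v \<in> {1..k}"
    and Cs_sub: "\<And>l. l \<in> {1..n} \<Longrightarrow> Cs l \<subseteq> {1..k} \<and> card (Cs l) \<le> 2"
    and \<theta>_nonneg: "\<And>l s. l \<in> {1..n} \<Longrightarrow> s \<in> valid_states k E \<Longrightarrow> \<theta> l s \<ge> 0"
    and \<theta>_local: "\<And>l s s'. l \<in> {1..n} \<Longrightarrow> s \<in> valid_states k E \<Longrightarrow> s' \<in> valid_states k E \<Longrightarrow>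
                     (\<forall>i\<in>Cs l. s i = s' i) \<Longrightarrow> \<theta> l s = \<theta> l s'"
    and cover: "is_cover (valid_states k E) n Cs K"
    and X_def: "\<And>i j b. i \<in> {1..k} \<Longrightarrow> j \<in> {1..k} \<Longrightarrow>
                  (if in_corr n Cs {i, j} \<and> dichotomy (valid_states k E) i j b
                   then (\<exists>s1\<in>K. \<exists>s2\<in>K. is_pair i j b s1 s2 \<and>
                           X i j b = mean_loss n Cs \<theta> i s2 - mean_loss n Cs \<theta> i s1)
                   else X i j b = 0)"
  shows "\<forall>s\<in>valid_states k E. \<forall>i\<in>{1..k}. \<forall>b. s i = b \<longrightarrow>
           (\<forall>s'\<in>K. s' i = b \<longrightarrow>
              mean_loss n Cs \<theta> i s = mean_loss n Cs \<theta> i s'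
                + (\<Sum>j=1..k. X i j b * (of_bool (s j) * of_bool (\<not> s' j)
                                         - of_bool (\<not> s j) * of_bool (s' j))))"
proof (intro ballI allI impI)
  fix s i b s'
  assume sS: "s \<in> valid_states k E" and iK: "i \<in> {1..k}" and sib: "s i = b"
    and s'K: "s' \<in> K" and s'ib: "s' i = b"
  let ?S = "valid_states k E"
  let ?mu = "mean_loss n Cs \<theta> i"
  have KS: "K \<subseteq> ?S" using cover by (simp add: is_cover_def)
  have s'S: "s' \<in> ?S" using s'K KS by blast
  have shape: "Cs l = {i} \<or> (\<exists>j. j \<noteq> i \<and> j \<in> {1..k} \<and> Cs l = {i, j})"
    if "l \<in> {1..n}" "i \<in> Cs l" for l
  proof -
    have fin: "finite (Cs l)" using Cs_sub[OF that(1)] finite_subset by blast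
    show ?thesis using card2_cases[OF fin _ that(2)] Cs_sub[OF that(1)] by blast
  qed
  define T where "T j = (\<Sum>l\<in>{1..n}. of_bool (Cs l = {i, j}) * (\<theta> l s - \<theta> l s'))" for j
  have claimA: "X i j b * (of_bool (s j) * of_bool (\<not> s' j) - of_bool (\<not> s j) * of_bool (s' j)) = T j"
    if jK: "j \<in> {1..k}" and jne: "j \<noteq> i" for j
  proof (cases "in_corr n Cs {i, j}")
    case nc: False
    have "T j = 0" unfolding T_def using nc by (intro sum.neutral) (auto simp: in_corr_def)
    moreover have "X i j b = 0" using X_def[OF iK jK] nc by simp
    ultimately show ?thesis by simp
  next
    case corr: True
    show ?thesis
    proof (cases "s j = s' j")
      case True
      have "\<theta> l s = \<theta> l s'" if "l \<in> {1..n}" "Cs l = {i, j}" for l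
        using \<theta>_local[OF that(1) sS s'S] that(2) True sib s'ib by auto
      then have "T j = 0" unfolding T_def by (intro sum.neutral) auto
      then show ?thesis using True by simp
    next
      case False
      have dich: "dichotomy ?S i j b"
        unfolding dichotomy_def using False jne sS s'S sib s'ib
        by (cases "s j") auto
      have ex: "\<exists>s1\<in>K. \<exists>s2\<in>K. is_pair i j b s1 s2 \<and> X i j b = ?mu s2 - ?mu s1"
        using X_def[OF iK jK, of b] corr dich by (simp only: if_True conj_absorb simp_thms)
      obtain s1 s2 where s1K: "s1 \<in> K" and s2K: "s2 \<in> K" and pr: "is_pair i j b s1 s2"
        and Xeq: "X i j b = ?mu s2 - ?mu s1"
        using ex by blast
      have s1S: "s1 \<in> ?S" and s2S: "s2 \<in> ?S" using s1K s2K KS by auto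
      have p: "\<And>l. l \<noteq> j \<Longrightarrow> s1 l = s2 l" "s1 i = b" "s2 i = b" "\<not> s1 j" "s2 j"
        using pr unfolding is_pair_def by auto
      have term1: "\<theta> l s2 * of_bool (i \<in> Cs l) - \<theta> l s1 * of_bool (i \<in> Cs l)
          = of_bool (Cs l = {i, j}) * (\<theta> l s2 - \<theta> l s1)" if l: "l \<in> {1..n}" for l
      proof (cases "i \<in> Cs l \<and> Cs l \<noteq> {i, j}")
        case True
        then have "j \<notin> Cs l" using shape[OF l] jne by auto
        then have "\<theta> l s2 = \<theta> l s1" using \<theta>_local[OF l s2S s1S] p(1) by metis
        then show ?thesis using True by simp
      next
        case False
        then have "i \<notin> Cs l \<or> Cs l = {i, j}" by blast
        then show ?thesis
        proof
          assume "i \<notin> Cs l"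
          then have "Cs l \<noteq> {i, j}" by blast
          then show ?thesis using \<open>i \<notin> Cs l\<close> by simp
        next
          assume "Cs l = {i, j}"
          then show ?thesis by simp
        qed
      qed
      have X1: "X i j b = (\<Sum>l\<in>{1..n}. of_bool (Cs l = {i, j}) * (\<theta> l s2 - \<theta> l s1))"
        unfolding Xeq mean_loss_def sum_subtractf[symmetric] using term1 by (intro sum.cong) auto
      have X2: "of_bool (Cs l = {i, j}) * (\<theta> l s2 - \<theta> l s1)
          = (of_bool (s j) * of_bool (\<not> s' j) - of_bool (\<not> s j) * of_bool (s' j))
            * (of_bool (Cs l = {i, j}) * (\<theta> l s - \<theta> l s'))" if l: "l \<in> {1..n}" for l
      proof (cases "Cs l = {i, j}")
        case cl: True
        show ?thesis
        proof (cases "s j")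
          case True
          then have "\<not> s' j" using False by simp
          then have "\<theta> l s2 = \<theta> l s" "\<theta> l s1 = \<theta> l s'"
            using \<theta>_local[OF l s2S sS] \<theta>_local[OF l s1S s'S] cl p sib s'ib True by auto
          then show ?thesis using cl True \<open>\<not> s' j\<close> by simp
        next
          case sf: False
          then have "s' j" using False by simp
          then have "\<theta> l s2 = \<theta> l s'" "\<theta> l s1 = \<theta> l s"
            using \<theta>_local[OF l s2S s'S] \<theta>_local[OF l s1S sS] cl p sib s'ib sf by auto
          then show ?thesis using cl sf \<open>s' j\<close> by simp
        qed
      qed simp
      let ?c = "of_bool (s j) * of_bool (\<not> s' j) - of_bool (\<not> s j) * of_bool (s' j) :: real"
      have "X i j b = (\<Sum>l\<in>{1..n}. ?c * (of_bool (Cs l = {i, j}) * (\<theta> l s - \<theta> l s')))"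
        unfolding X1 using X2 by (intro sum.cong) auto
      also have "\<dots> = ?c * T j" by (simp only: T_def sum_distrib_left)
      finally have "X i j b = ?c * T j" .
      moreover have "?c * ?c = 1" using False by (cases "s j") auto
      ultimately show ?thesis by (rule aux_cancel)
    qed
  qed
  have claimB: "?mu s - ?mu s' = (\<Sum>j\<in>{1..k} - {i}. T j)"
  proof -
    have "(\<Sum>j\<in>{1..k} - {i}. T j)
        = (\<Sum>l\<in>{1..n}. \<Sum>j\<in>{1..k} - {i}. of_bool (Cs l = {i, j}) * (\<theta> l s - \<theta> l s'))"
      unfolding T_def by (rule sum.swap)
    also have "\<dots> = (\<Sum>l\<in>{1..n}. \<theta> l s * of_bool (i \<in> Cs l) - \<theta> l s' * of_bool (i \<in> Cs l))"
    proof (intro sum.cong refl)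
      fix l assume l: "l \<in> {1..n}"
      show "(\<Sum>j\<in>{1..k} - {i}. of_bool (Cs l = {i, j}) * (\<theta> l s - \<theta> l s'))
          = \<theta> l s * of_bool (i \<in> Cs l) - \<theta> l s' * of_bool (i \<in> Cs l)"
      proof (cases "i \<in> Cs l")
        case False
        then show ?thesis by (auto intro!: sum.neutral)
      next
        case True
        show ?thesis
        proof (cases "Cs l = {i}")
          case c1: True
          have "\<theta> l s = \<theta> l s'" using \<theta>_local[OF l sS s'S] c1 sib s'ib by auto
          moreover have "(\<Sum>j\<in>{1..k} - {i}. of_bool (Cs l = {i, j}) * (\<theta> l s - \<theta> l s')) = 0"
            using c1 by (intro sum.neutral) (auto simp: doubleton_eq_iff)
          ultimately show ?thesis by simp
        next
          case c2: False
          then obtain j0 where j0: "j0 \<noteq> i" "j0 \<in> {1..k}" "Cs l = {i, j0}"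
            using shape[OF l True] by blast
          have "(\<Sum>j\<in>{1..k} - {i}. of_bool (Cs l = {i, j}) * (\<theta> l s - \<theta> l s'))
              = (\<Sum>j\<in>{1..k} - {i}. if j = j0 then \<theta> l s - \<theta> l s' else 0)"
            using j0 by (intro sum.cong refl) (auto simp: doubleton_eq_iff)
          also have "\<dots> = \<theta> l s - \<theta> l s'" using j0 by (simp add: sum.delta)
          finally show ?thesis using True by simp
        qed
      qed
    qed
    also have "\<dots> = ?mu s - ?mu s'" unfolding mean_loss_def by (simp add: sum_subtractf)
    finally show ?thesis by simp
  qed
  have "(\<Sum>j=1..k. X i j b * (of_bool (s j) * of_bool (\<not> s' j) - of_bool (\<not> s j) * of_bool (s' j)))
      = (\<Sum>j\<in>{1..k} - {i}. X i j b * (of_bool (s j) * of_bool (\<not> s' j) - of_bool (\<not> s j) * of_bool (s' j)))"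
    using iK sib s'ib by (subst sum.remove[of _ i]) auto
  also have "\<dots> = (\<Sum>j\<in>{1..k} - {i}. T j)" using claimA by (intro sum.cong) auto
  finally show "?mu s = ?mu s' + (\<Sum>j=1..k. X i j b * (of_bool (s j) * of_bool (\<not> s' j) - of_bool (\<not> s j) * of_bool (s' j)))"
    using claimB by simp
qed

end
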